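(* Let $f\in C^1([0,1],\mathbb{R})$ satisfy $f(0)=f(1)=0$, $f(s)>0$ for all $s\in(0,1)$, $f'(1)<0$, and suppose there exist $s_0\in(0,1)$, $K\ge 0$, $\alpha>0$ and $r>0$ such that $f(s)\le r\frac{s}{(1+|\ln s|)^\alpha}$ for all $s\in(0,1)$ and $f(s)\ge r\frac{s}{(1+|\ln s|)^\alpha}(1-Ks)$ for all $s\in(0,s_0]$. Let $u_0:\mathbb{R}\to[0,1]$ be uniformly continuous with $u_0>0$ on $\mathbb{R}$, $\liminf_{x\to-\infty}u_0>0$, $\lim_{x\to+\infty}u_0=0$, of class $C^2$ and nonincreasing on $[\xi_0,+\infty)$ for some $\xi_0>0$, and such that $\varphi_0:=-\ln u_0$ satisfies $\varphi_0'=o(\varphi_0^{-\alpha})$ and $\varphi_0''=o(\varphi_0')$ as $x\to+\infty$. Let $\varepsilon>0$ and $\rho$ with $\max\{r-\frac{\varepsilon}{2},\frac34 r\}<\rho<r$. Define $$w(t,x):=\exp\Big\{1-\big[(1+\varphi_0(x))^{\alpha+1}-\rho(\alpha+1)t\big]^{\frac{1}{\alpha+1}}\Big\},\qquad x_0(t):=\sup\Big\{x: u_0(x)=\exp\big(1-(\rho(\alpha+1)t+1)^{\frac{1}{\alpha+1}}\big)\Big\},$$ $\xi_1:=\max\{\xi_0,x_0(0)\}$, $\zeta:=\inf_{x<\xi_1}u_0(x)\in(0,1]$, and for $M\ge \max\{\frac{1}{2\zeta},\frac{1}{4s_0}\}$ let $g(y):=y(1-My)$, $$x_M(t):=\sup\Big\{x\in\mathbb{R}: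 u_0(x)=\exp\Big\{1-\big((1+\ln(2M))^{\alpha+1}+\rho(\alpha+1)t\big)^{\frac{1}{\alpha+1}}\Big\}\Big\},$$ and $v(t,x):=\frac{1}{4M}$ for $x\le x_M(t)$, $v(t,x):=g(w(t,x))$ for $x>x_M(t)$. Then there exists $M$ large enough such that $v$ is a subsolution of $u_t=u_{xx}+f(u)$ for all $t>0$ and $x\in\mathbb{R}$, i.e. $v_t-v_{xx}-f(v)\le 0$ on each of the regions $\{x\le x_M(t)\}$ and $\{x>x_M(t)\}$.
   Context: One has $w(t,x_M(t))=\frac{1}{2M}$ and $w(t,x)<\frac{1}{2M}$ for $x>x_M(t)$, so $v$ is continuous and $0<v\le s_0$. *)

theory Defs
  imports "HOL-Analysis.Analysis" "HOL-Library.Landau_Symbols"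
begin

definition phi0 :: "(real \<Rightarrow> real) \<Rightarrow> real \<Rightarrow> real" where
  "phi0 u0 x = - ln (u0 x)"

definition wfun :: "(real \<Rightarrow> real) \<Rightarrow> real \<Rightarrow> real \<Rightarrow> real \<Rightarrow> real \<Rightarrow> real" where
  "wfun u0 \<alpha> \<rho> t x =
     exp (1 - ((1 + phi0 u0 x) powr (\<alpha> + 1) - \<rho> * (\<alpha> + 1) * t) powr (1 / (\<alpha> + 1)))"

definition x0fun :: "(real \<Rightarrow> real) \<Rightarrow> real \<Rightarrow> real \<Rightarrow> real \<Rightarrow> real" where
  "x0fun u0 \<alpha> \<rho> t =
     Sup {x. u0 x = exp (1 - (\<rho> * (\<alpha> + 1) * t + 1) powr (1 / (\<alpha> + 1)))}"

definition xMfun :: "(real \<Rightarrow> real) \<Rightarrow> real \<Rightarrow> real \<Rightarrow> real \<Rightarrow> real \<Rightarrow> real" where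
  "xMfun u0 \<alpha> \<rho> M t =
     Sup {x. u0 x = exp (1 - ((1 + ln (2 * M)) powr (\<alpha> + 1) + \<rho> * (\<alpha> + 1) * t) powr (1 / (\<alpha> + 1)))}"

definition gfun :: "real \<Rightarrow> real \<Rightarrow> real" where
  "gfun M y = y * (1 - M * y)"

definition vfun :: "(real \<Rightarrow> real) \<Rightarrow> real \<Rightarrow> real \<Rightarrow> real \<Rightarrow> real \<Rightarrow> real \<Rightarrow> real" where
  "vfun u0 \<alpha> \<rho> M t x =
     (if x \<le> xMfun u0 \<alpha> \<rho> M t then 1 / (4 * M) else gfun M (wfun u0 \<alpha> \<rho> t x))"

definition subsol_at :: "(real \<Rightarrow> real) \<Rightarrow> (real \<Rightarrow> real \<Rightarrow> real) \<Rightarrow> real \<Rightarrow> real \<Rightarrow> bool" where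
  "subsol_at f V t x \<longleftrightarrow>
     (\<exists>Vt Vx Vxx. ((\<lambda>s. V s x) has_real_derivative Vt) (at t)
        \<and> (\<forall>\<^sub>F y in nhds x. (V t has_real_derivative Vx y) (at y))
        \<and> (Vx has_real_derivative Vxx) (at x)
        \<and> Vt - Vxx - f (V t x) \<le> 0)"

end

theory Submission
  imports Defs "HOL-Real_Asymp.Real_Asymp"
begin


lemma phi_derivs:
  assumes d1: "\<forall>x\<in>{\<xi>0..}. (u0 has_real_derivative u1 x) (at x within {\<xi>0..})"
    and d2: "\<forall>x\<in>{\<xi>0..}. (u1 has_real_derivative u2 x) (at x within {\<xi>0..})"
    and pos: "\<forall>x. u0 x > 0" and y: "y > \<xi>0"
  shows "(phi0 u0 has_real_derivative deriv (phi0 u0) y) (at y)"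
    "(deriv (phi0 u0) has_real_derivative deriv (deriv (phi0 u0)) y) (at y)"
proof -
  have int: "\<And>z. z > \<xi>0 \<Longrightarrow> at z within {\<xi>0..} = at z"
    by (rule at_within_interior) (simp)
  have D1: "(u0 has_real_derivative u1 z) (at z)" if "z > \<xi>0" for z
    using d1[rule_format, of z] that int[OF that] by auto
  have D2: "(u1 has_real_derivative u2 z) (at z)" if "z > \<xi>0" for z
    using d2[rule_format, of z] that int[OF that] by auto
  have P: "(phi0 u0 has_real_derivative - (u1 z / u0 z)) (at z)" if "z > \<xi>0" for z
  proof -
    have "((\<lambda>x. - ln (u0 x)) has_real_derivative - (u1 z / u0 z)) (at z)"
      using D1[OF that] pos by (auto intro!: derivative_eq_intros)
    then show ?thesis by (simp add: phi0_def[abs_def])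
  qed
  have dP: "deriv (phi0 u0) z = - (u1 z / u0 z)" if "z > \<xi>0" for z
    using P[OF that] by (rule DERIV_imp_deriv)
  show "(phi0 u0 has_real_derivative deriv (phi0 u0) y) (at y)"
    using P[OF y] dP[OF y] by simp
  have Q: "((\<lambda>z. - (u1 z / u0 z)) has_real_derivative - ((u2 y * u0 y - u1 y * u1 y) / (u0 y * u0 y))) (at y)"
    using D1[OF y] D2[OF y] pos[rule_format, of y]
    by (auto intro!: derivative_eq_intros simp: field_simps power2_eq_square)
  have Q2: "(deriv (phi0 u0) has_real_derivative - ((u2 y * u0 y - u1 y * u1 y) / (u0 y * u0 y))) (at y)"
    by (rule has_field_derivative_transform_within_open[OF Q, of "{\<xi>0<..}"]) (use y dP in auto)
  then show "(deriv (phi0 u0) has_real_derivative deriv (deriv (phi0 u0)) y) (at y)"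
    using DERIV_imp_deriv[OF Q2] by simp
qed




lemma space_derivs:
  fixes P p1 :: "real \<Rightarrow> real" and S :: "real set"
  assumes dP: "\<And>y. y \<in> S \<Longrightarrow> (P has_real_derivative p1 y) (at y)"
    and dp1: "(p1 has_real_derivative p2) (at x)"
    and S: "open S" "x \<in> S"
    and psi: "\<And>y. y \<in> S \<Longrightarrow> (1 + P y) powr (\<alpha> + 1) - \<rho> * (\<alpha> + 1) * t > 0"
    and E: "\<And>y. y \<in> S \<Longrightarrow> 1 + P y > 0"
    and \<alpha>: "\<alpha> > 0"
  defines "F \<equiv> \<lambda>y. ((1 + P y) powr (\<alpha> + 1) - \<rho> * (\<alpha> + 1) * t) powr (1 / (\<alpha> + 1))"
  defines "F1 \<equiv> \<lambda>y. F y powr (- \<alpha>) * (1 + P y) powr \<alpha> * p1 y"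
  shows "\<And>y. y \<in> S \<Longrightarrow> (F has_real_derivative F1 y) (at y)"
    "(F1 has_real_derivative
        (- \<alpha> * F x powr (- \<alpha> - 1) * F1 x) * (1 + P x) powr \<alpha> * p1 x
        + F x powr (- \<alpha>) * (\<alpha> * (1 + P x) powr (\<alpha> - 1) * p1 x) * p1 x
        + F x powr (- \<alpha>) * (1 + P x) powr \<alpha> * p2) (at x)"
proof -
  have Fpos: "F y > 0" if "y \<in> S" for y using psi[OF that] by (simp add: F_def)
  show DF: "(F has_real_derivative F1 y) (at y)" if y: "y \<in> S" for y
  proof -
    let ?psi = "(1 + P y) powr (\<alpha> + 1) - \<rho> * (\<alpha> + 1) * t"
    have "(F has_real_derivative (1 / (\<alpha> + 1)) * ?psi powr (1 / (\<alpha> + 1) - 1) *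
              ((\<alpha> + 1) * (1 + P y) powr (\<alpha> + 1 - 1) * p1 y - 0)) (at y)"
      unfolding F_def
      using DERIV_add[OF DERIV_const dP[OF y], of 1]
      by (intro DERIV_fun_powr[where r="1 / (\<alpha> + 1)", simplified] derivative_intros dP y psi[OF y] E[OF y]
            DERIV_diff DERIV_fun_powr[where r="\<alpha> + 1", simplified] DERIV_const) auto
    moreover have "?psi powr (1 / (\<alpha> + 1) - 1) = F y powr (- \<alpha>)"
    proof -
      have "F y powr (- \<alpha>) = ?psi powr (1 / (\<alpha> + 1) * - \<alpha>)"
        by (simp add: F_def powr_powr)
      also have "1 / (\<alpha> + 1) * - \<alpha> = 1 / (\<alpha> + 1) - 1" using \<alpha> by (simp add: field_simps)
      finally show ?thesis by simp
    qed
    moreover have "(1 / (\<alpha> + 1)) * c * ((\<alpha> + 1) * d * p1 y - 0) = c * d * p1 y" for c d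
      using \<alpha> by (simp add: field_simps)
    ultimately show ?thesis by (simp add: F1_def)
  qed
  have Px: "(P has_real_derivative p1 x) (at x)" using dP S by auto
  show "(F1 has_real_derivative
        (- \<alpha> * F x powr (- \<alpha> - 1) * F1 x) * (1 + P x) powr \<alpha> * p1 x
        + F x powr (- \<alpha>) * (\<alpha> * (1 + P x) powr (\<alpha> - 1) * p1 x) * p1 x
        + F x powr (- \<alpha>) * (1 + P x) powr \<alpha> * p2) (at x)"
  proof -
    have h1: "((\<lambda>y. F y powr (-\<alpha>)) has_real_derivative (-\<alpha>) * F x powr (-\<alpha> - 1) * F1 x) (at x)"
      using DERIV_fun_powr[OF DF[OF S(2)] Fpos[OF S(2)], of "-\<alpha>"] by simp
    have P1: "((\<lambda>y. 1 + P y) has_real_derivative p1 x) (at x)"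
      using DERIV_add[OF DERIV_const Px, of 1] by simp
    have h2: "((\<lambda>y. (1 + P y) powr \<alpha>) has_real_derivative \<alpha> * (1 + P x) powr (\<alpha> - 1) * p1 x) (at x)"
      using DERIV_fun_powr[OF P1 E[OF S(2)], of \<alpha>] by simp
    have "F1 = (\<lambda>y. F y powr (- \<alpha>) * (1 + P y) powr \<alpha> * p1 y)" by (simp add: F1_def)
    then show ?thesis using DERIV_mult[OF DERIV_mult[OF h1 h2] dp1] by (simp add: algebra_simps)
  qed
qed




lemma V_space_derivs:
  fixes F F1 :: "real \<Rightarrow> real" and S :: "real set"
  assumes dF: "\<And>y. y \<in> S \<Longrightarrow> (F has_real_derivative F1 y) (at y)"
    and dF1: "(F1 has_real_derivative F2) (at x)"
    and x: "x \<in> S"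
  shows "\<And>y. y \<in> S \<Longrightarrow> ((\<lambda>y. gfun M (exp (1 - F y))) has_real_derivative
            (1 - 2 * M * exp (1 - F y)) * (- exp (1 - F y) * F1 y)) (at y)"
    "((\<lambda>y. (1 - 2 * M * exp (1 - F y)) * (- exp (1 - F y) * F1 y)) has_real_derivative
        (1 - 4 * M * exp (1 - F x)) * exp (1 - F x) * (F1 x)\<^sup>2
        - (1 - 2 * M * exp (1 - F x)) * exp (1 - F x) * F2) (at x)"
proof -
  show "((\<lambda>y. gfun M (exp (1 - F y))) has_real_derivative
            (1 - 2 * M * exp (1 - F y)) * (- exp (1 - F y) * F1 y)) (at y)" if y: "y \<in> S" for y
    unfolding gfun_def
    by (rule derivative_eq_intros dF[OF y] refl)+ (simp add: algebra_simps)
  show "((\<lambda>y. (1 - 2 * M * exp (1 - F y)) * (- exp (1 - F y) * F1 y)) has_real_derivative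
        (1 - 4 * M * exp (1 - F x)) * exp (1 - F x) * (F1 x)\<^sup>2
        - (1 - 2 * M * exp (1 - F x)) * exp (1 - F x) * F2) (at x)"
    by (rule derivative_eq_intros dF[OF x] dF1 refl)+ (simp add: algebra_simps power2_eq_square)
qed

lemma V_time_deriv:
  fixes C :: real
  assumes psi: "C - \<rho> * (\<alpha> + 1) * t > 0" and \<alpha>: "\<alpha> > 0"
  shows "((\<lambda>s. gfun M (exp (1 - (C - \<rho> * (\<alpha> + 1) * s) powr (1 / (\<alpha> + 1))))) has_real_derivative
     (1 - 2 * M * exp (1 - (C - \<rho> * (\<alpha> + 1) * t) powr (1 / (\<alpha> + 1))))
     * exp (1 - (C - \<rho> * (\<alpha> + 1) * t) powr (1 / (\<alpha> + 1))) * \<rho>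
     * ((C - \<rho> * (\<alpha> + 1) * t) powr (1 / (\<alpha> + 1))) powr (- \<alpha>)) (at t)"
proof -
  let ?psi = "C - \<rho> * (\<alpha> + 1) * t"
  have d: "((\<lambda>s. (C - \<rho> * (\<alpha> + 1) * s) powr (1 / (\<alpha> + 1))) has_real_derivative
      (1 / (\<alpha> + 1)) * ?psi powr (1 / (\<alpha> + 1) - 1) * (0 - \<rho> * (\<alpha> + 1) * 1)) (at t)"
  proof -
    have "((\<lambda>s. C - \<rho> * (\<alpha> + 1) * s) has_real_derivative 0 - \<rho> * (\<alpha> + 1) * 1) (at t)"
      by (intro DERIV_diff DERIV_const DERIV_cmult DERIV_ident)
    from DERIV_fun_powr[OF this psi, of "1 / (\<alpha> + 1)"] show ?thesis by simp
  qed
  have e: "?psi powr (1 / (\<alpha> + 1) - 1) = (?psi powr (1 / (\<alpha> + 1))) powr (- \<alpha>)"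
  proof -
    have "(?psi powr (1 / (\<alpha> + 1))) powr (- \<alpha>) = ?psi powr (1 / (\<alpha> + 1) * - \<alpha>)"
      by (simp add: powr_powr)
    also have "1 / (\<alpha> + 1) * - \<alpha> = 1 / (\<alpha> + 1) - 1" using \<alpha> by (simp add: field_simps)
    finally show ?thesis by simp
  qed
  have d2: "((\<lambda>s. (C - \<rho> * (\<alpha> + 1) * s) powr (1 / (\<alpha> + 1))) has_real_derivative
      - \<rho> * (?psi powr (1 / (\<alpha> + 1))) powr (- \<alpha>)) (at t)"
  proof -
    have "(1 / (\<alpha> + 1)) * c * (0 - \<rho> * (\<alpha> + 1) * 1) = - \<rho> * c" for c
      using \<alpha> by (simp add: field_simps)
    then show ?thesis using d e by simp
  qed
  show ?thesis unfolding gfun_def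
    by (rule derivative_eq_intros d2 refl)+ (simp add: algebra_simps)
qed




lemma core_ineq:
  fixes f :: "real \<Rightarrow> real"
  assumes \<alpha>: "\<alpha> > 0" and r: "r > 0" and \<rho>: "3 / 4 * r < \<rho>" "\<rho> < r"
    and K: "K \<ge> 0" "2 * K \<le> M" and M: "M > 0"
    and w: "w = exp (1 - F)" and F: "F \<ge> 1" and Mw: "M * w \<le> 1 / 2"
    and gs0: "w * (1 - M * w) \<le> s0"
    and f_lower: "\<forall>s\<in>{0<..s0}. f s \<ge> r * s / (1 + \<bar>ln s\<bar>) powr \<alpha> * (1 - K * s)"
    and E: "E \<ge> 1" and p1: "\<bar>p1\<bar> * E powr \<alpha> \<le> \<delta>" and p2: "\<bar>p2\<bar> \<le> \<delta> * \<bar>p1\<bar>"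
    and \<delta>: "\<delta> \<ge> 0" "\<delta>\<^sup>2 * (2 + 2 * \<alpha>) \<le> (r - \<rho>) / 2"
    and \<theta>: "(F + ln 2) powr (- \<alpha>) \<ge> (\<rho> + r) / (2 * r) * F powr (- \<alpha>)"
    and F1: "F1 = F powr (- \<alpha>) * E powr \<alpha> * p1"
    and F2: "F2 = (- \<alpha> * F powr (- \<alpha> - 1) * F1) * E powr \<alpha> * p1
        + F powr (- \<alpha>) * (\<alpha> * E powr (\<alpha> - 1) * p1) * p1
        + F powr (- \<alpha>) * E powr \<alpha> * p2"
  shows "(1 - 2 * M * w) * w * \<rho> * F powr (- \<alpha>)
     - ((1 - 4 * M * w) * w * F1\<^sup>2 - (1 - 2 * M * w) * w * F2) - f (gfun M w) \<le> 0"
proof -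
  define Fa where "Fa = F powr (- \<alpha>)"
  define Fa1 where "Fa1 = F powr (- \<alpha> - 1)"
  define Ea where "Ea = E powr \<alpha>"
  define Ea1 where "Ea1 = E powr (\<alpha> - 1)"
  define q where "q = \<bar>p1\<bar> * Ea"
  define c where "c = (r - \<rho>) / 2"
  have wpos: "w > 0" using w by simp
  have Fa0: "Fa > 0" "Fa \<le> 1" unfolding Fa_def using F \<alpha> powr_mono[of "-\<alpha>" 0 F] by auto
  have Fa10: "Fa1 > 0" "Fa1 \<le> 1" unfolding Fa1_def using F \<alpha> powr_mono[of "-\<alpha>-1" 0 F] by auto
  have Ea0: "Ea \<ge> 1" unfolding Ea_def using E \<alpha> powr_mono[of 0 \<alpha> E] by auto
  have Ea1E: "Ea1 * E = Ea" unfolding Ea1_def Ea_def using E powr_add[of E "\<alpha> - 1" 1] by simp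
  have Ea1pos: "Ea1 \<ge> 0" unfolding Ea1_def by simp
  have q0: "q \<ge> 0" "q \<le> \<delta>" using p1 by (auto simp: q_def Ea_def)
  have p1q: "\<bar>p1\<bar> \<le> q" unfolding q_def using Ea0 mult_left_mono[of 1 Ea "\<bar>p1\<bar>"] by simp
  have qq: "q * q \<le> \<delta>\<^sup>2" using q0 mult_mono[of q \<delta> q \<delta>] by (simp add: power2_eq_square)
  have F1abs: "\<bar>F1\<bar> = Fa * q" unfolding F1 q_def Fa_def Ea_def by (simp add: abs_mult)
  have F1sq: "F1\<^sup>2 \<le> Fa * \<delta>\<^sup>2"
  proof -
    have "F1\<^sup>2 = \<bar>F1\<bar>\<^sup>2" by simp
    also have "\<dots> = Fa * (Fa * (q * q))" unfolding F1abs by (simp add: power2_eq_square)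
    finally have "F1\<^sup>2 = Fa * (Fa * (q * q))" .
    also have "\<dots> \<le> Fa * (1 * (q * q))"
      using Fa0 q0 by (intro mult_left_mono mult_right_mono) auto
    also have "\<dots> \<le> Fa * \<delta>\<^sup>2" using qq Fa0 by (simp add: mult_left_mono)
    finally show ?thesis .
  qed
  have T1: "\<bar>(- \<alpha> * Fa1 * F1) * Ea * p1\<bar> \<le> \<alpha> * Fa * \<delta>\<^sup>2"
  proof -
    have "\<bar>(- \<alpha> * Fa1 * F1) * Ea * p1\<bar> = \<alpha> * Fa1 * (Fa * (q * q))"
      using F1abs \<alpha> Fa10 Ea0 by (simp add: abs_mult q_def)
    also have "\<dots> \<le> \<alpha> * 1 * (Fa * \<delta>\<^sup>2)"
      using Fa10 Fa0 qq \<alpha> q0 by (intro mult_mono mult_left_mono) auto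
    finally show ?thesis by simp
  qed
  have T2: "\<bar>Fa * (\<alpha> * Ea1 * p1) * p1\<bar> \<le> \<alpha> * Fa * \<delta>\<^sup>2"
  proof -
    have a: "Ea1 * (p1 * p1) \<le> q * q"
    proof -
      have "Ea1 * (p1 * p1) \<le> Ea1 * E * (p1 * p1)"
        using Ea1pos E mult_right_mono[of 1 E Ea1] by (intro mult_right_mono) (auto simp: mult.commute)
      also have "\<dots> = (Ea1 * E) * (\<bar>p1\<bar> * \<bar>p1\<bar>)" by simp
      also have "\<dots> = q * \<bar>p1\<bar>" unfolding Ea1E q_def by (simp add: algebra_simps)
      also have "\<dots> \<le> q * q" using p1q q0 by (intro mult_left_mono) auto
      finally show ?thesis .
    qed
    have "\<bar>Fa * (\<alpha> * Ea1 * p1) * p1\<bar> = \<alpha> * Fa * (Ea1 * (p1 * p1))"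
      using Fa0 \<alpha> Ea1pos by (simp add: abs_mult abs_mult_self_eq)
    also have "\<dots> \<le> \<alpha> * Fa * \<delta>\<^sup>2" using a qq Fa0 \<alpha> by (intro mult_left_mono) auto
    finally show ?thesis .
  qed
  have T3: "\<bar>Fa * Ea * p2\<bar> \<le> Fa * \<delta>\<^sup>2"
  proof -
    have "\<bar>Fa * Ea * p2\<bar> = Fa * (Ea * \<bar>p2\<bar>)" using Fa0 Ea0 by (simp add: abs_mult)
    also have "\<dots> \<le> Fa * (Ea * (\<delta> * \<bar>p1\<bar>))" using p2 Fa0 Ea0 by (intro mult_left_mono) auto
    also have "\<dots> = Fa * (\<delta> * q)" by (simp add: q_def algebra_simps)
    also have "\<dots> \<le> Fa * (\<delta> * \<delta>)" using q0 \<delta> Fa0 by (intro mult_left_mono) auto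
    finally show ?thesis by (simp add: power2_eq_square)
  qed
  have F2abs: "\<bar>F2\<bar> \<le> (2 * \<alpha> + 1) * Fa * \<delta>\<^sup>2"
  proof -
    have "F2 = (- \<alpha> * Fa1 * F1) * Ea * p1 + Fa * (\<alpha> * Ea1 * p1) * p1 + Fa * Ea * p2"
      by (simp add: F2 Fa_def Fa1_def Ea_def Ea1_def)
    then have "\<bar>F2\<bar> \<le> \<bar>(- \<alpha> * Fa1 * F1) * Ea * p1\<bar> + \<bar>Fa * (\<alpha> * Ea1 * p1) * p1\<bar> + \<bar>Fa * Ea * p2\<bar>"
      by linarith
    then show ?thesis using T1 T2 T3 by (simp add: algebra_simps)
  qed
  have errs: "F1\<^sup>2 + \<bar>F2\<bar> \<le> Fa * c"
  proof -
    have "F1\<^sup>2 + \<bar>F2\<bar> \<le> Fa * (\<delta>\<^sup>2 * (2 + 2 * \<alpha>))" using F1sq F2abs by (simp add: algebra_simps)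
    also have "\<dots> \<le> Fa * c" using \<delta> Fa0 by (intro mult_left_mono) (auto simp: c_def)
    finally show ?thesis .
  qed
  define y where "y = M * w"
  have y: "y > 0" "y \<le> 1 / 2" using Mw M wpos by (auto simp: y_def)
  have step3: "(1 - 2 * M * w) * w * \<rho> * Fa - ((1 - 4 * M * w) * w * F1\<^sup>2 - (1 - 2 * M * w) * w * F2)
      \<le> w * ((1 - 2 * y) * \<rho> * Fa + Fa * c)"
  proof -
    have a: "- (1 - 4 * y) * F1\<^sup>2 \<le> F1\<^sup>2"
    proof -
      have "- (1 - 4 * y) * F1\<^sup>2 \<le> 1 * F1\<^sup>2" using y by (intro mult_right_mono) auto
      then show ?thesis by simp
    qed
    have b: "(1 - 2 * y) * F2 \<le> \<bar>F2\<bar>"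
    proof -
      have "(1 - 2 * y) * F2 \<le> (1 - 2 * y) * \<bar>F2\<bar>" using y by (intro mult_left_mono) auto
      also have "\<dots> \<le> 1 * \<bar>F2\<bar>" using y by (intro mult_right_mono) auto
      finally show ?thesis by simp
    qed
    have "(1 - 2 * y) * \<rho> * Fa - (1 - 4 * y) * F1\<^sup>2 + (1 - 2 * y) * F2 \<le> (1 - 2 * y) * \<rho> * Fa + Fa * c"
      using a b errs by linarith
    then have "w * ((1 - 2 * y) * \<rho> * Fa - (1 - 4 * y) * F1\<^sup>2 + (1 - 2 * y) * F2) \<le> w * ((1 - 2 * y) * \<rho> * Fa + Fa * c)"
      using wpos by (intro mult_left_mono) auto
    then show ?thesis by (simp add: y_def algebra_simps)
  qed
  have Kw: "K * w \<le> y / 2" using K wpos by (simp add: y_def mult_right_mono)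
  have step4: "(1 - 2 * y) * \<rho> + c \<le> (\<rho> + r) / 2 * ((1 - y) * (1 - K * w))"
  proof -
    have "(1 - y) * (1 - y / 2) \<le> (1 - y) * (1 - K * w)" using y Kw by (intro mult_left_mono) auto
    moreover have "1 - 3 / 2 * y \<le> (1 - y) * (1 - y / 2)" using y by (simp add: algebra_simps power2_eq_square)
    ultimately have "1 - 3 / 2 * y \<le> (1 - y) * (1 - K * w)" by linarith
    then have "(\<rho> + r) / 2 * (1 - 3 / 2 * y) \<le> (\<rho> + r) / 2 * ((1 - y) * (1 - K * w))"
      using r \<rho> by (intro mult_left_mono) auto
    moreover have "(1 - 2 * y) * \<rho> + c \<le> (\<rho> + r) / 2 * (1 - 3 / 2 * y)"
    proof -
      have h: "y * (5 / 4 * \<rho> - 3 / 4 * r) \<ge> 0" by (rule mult_nonneg_nonneg) (use y \<rho> in auto)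
      have e: "(\<rho> + r) / 2 * (1 - 3 / 2 * y) - ((1 - 2 * y) * \<rho> + c) = y * (5 / 4 * \<rho> - 3 / 4 * r)"
        by (simp add: c_def field_simps)
      show ?thesis using h e by linarith
    qed
    ultimately show ?thesis by linarith
  qed
  define g where "g = w * (1 - y)"
  have g: "g > 0" "g \<le> w" "g \<le> s0" using gs0 y wpos by (auto simp: g_def y_def mult_le_cancel_left1)
  have lng: "1 + \<bar>ln g\<bar> \<le> F + ln 2"
  proof -
    have "ln g = ln w + ln (1 - y)" using wpos y by (simp add: g_def ln_mult)
    moreover have "ln w = 1 - F" using w by simp
    moreover have "ln (1 - y) \<le> 0" using y by simp
    moreover have "ln (1 - y) \<ge> - ln 2"
    proof -
      have "ln (1 / 2) \<le> ln (1 - y)" using y by (subst ln_le_cancel_iff) auto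
      then show ?thesis by (simp add: ln_div)
    qed
    ultimately show ?thesis using F by linarith
  qed
  have lgpos: "1 + \<bar>ln g\<bar> > 0" by simp
  have Kg: "K * g \<le> K * w" using g K by (simp add: mult_left_mono)
  have Kg1: "1 - K * g \<ge> 0" using Kg Kw y by linarith
  have rg: "r * g \<ge> 0" using r g by simp
  have fg: "f g \<ge> r * g / (1 + \<bar>ln g\<bar>) powr \<alpha> * (1 - K * g)" using f_lower g by auto
  have P1: "(F + ln 2) powr (- \<alpha>) \<le> 1 / (1 + \<bar>ln g\<bar>) powr \<alpha>"
  proof -
    have "(1 + \<bar>ln g\<bar>) powr \<alpha> \<le> (F + ln 2) powr \<alpha>" using lng \<alpha> by (intro powr_mono2) auto
    then show ?thesis using lgpos by (simp add: powr_minus divide_simps)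
  qed
  have "w * ((1 - 2 * y) * \<rho> * Fa + Fa * c) = w * Fa * ((1 - 2 * y) * \<rho> + c)" by (simp add: algebra_simps)
  also have "\<dots> \<le> w * Fa * ((\<rho> + r) / 2 * ((1 - y) * (1 - K * w)))"
    using step4 wpos Fa0 by (intro mult_left_mono) auto
  also have "\<dots> = r * (w * (1 - y)) * ((1 - K * w)) * ((\<rho> + r) / (2 * r) * Fa)"
    using r by (simp add: field_simps)
  also have "\<dots> \<le> r * g * (1 - K * g) * (F + ln 2) powr (- \<alpha>)"
  proof (rule mult_mono)
    show "(\<rho> + r) / (2 * r) * Fa \<le> (F + ln 2) powr (- \<alpha>)" using \<theta> by (simp add: Fa_def)
    show "r * (w * (1 - y)) * (1 - K * w) \<le> r * g * (1 - K * g)"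
    proof -
      have "r * g * (1 - K * w) \<le> r * g * (1 - K * g)" using Kg rg by (intro mult_left_mono) auto
      then show ?thesis by (simp add: g_def)
    qed
    show "0 \<le> r * g * (1 - K * g)" using rg Kg1 by simp
  qed (use r Fa0 \<rho> in auto)
  also have "\<dots> \<le> r * g * (1 - K * g) * (1 / (1 + \<bar>ln g\<bar>) powr \<alpha>)"
    using P1 rg Kg1 by (intro mult_left_mono) auto
  also have "\<dots> \<le> f g" using fg by (simp add: field_simps)
  finally have main: "w * ((1 - 2 * y) * \<rho> * Fa + Fa * c) \<le> f g" .
  have "gfun M w = g" by (simp add: gfun_def g_def y_def)
  then show ?thesis using step3 main by (simp add: Fa_def)
qed




lemma theta_ev:
  fixes \<alpha> \<theta>0 :: real
  assumes \<alpha>: "\<alpha> > 0" and th: "\<theta>0 < 1"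
  shows "\<exists>Fs. \<forall>F\<ge>Fs. (F + ln 2) powr (- \<alpha>) \<ge> \<theta>0 * F powr (- \<alpha>)"
proof -
  have lim: "((\<lambda>F::real. ((F + ln 2) / F) powr (- \<alpha>)) \<longlongrightarrow> 1) at_top"
  proof -
    have "((\<lambda>F::real. (F + ln 2) / F) \<longlongrightarrow> 1) at_top" by real_asymp
    from tendsto_powr[OF this tendsto_const, of "-\<alpha>"] show ?thesis by simp
  qed
  have ev: "\<forall>\<^sub>F F in at_top. ((F + ln 2) / F) powr (- \<alpha>) > \<theta>0 \<and> F > (0::real)"
    using order_tendstoD(1)[OF lim th] eventually_gt_at_top[of 0] by (rule eventually_conj)
  then obtain Fs where Fs: "\<And>F. F \<ge> Fs \<Longrightarrow> ((F + ln 2) / F) powr (- \<alpha>) > \<theta>0 \<and> F > 0"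
    by (auto simp: eventually_at_top_linorder)
  show ?thesis
  proof (intro exI allI impI)
    fix F assume "F \<ge> Fs"
    with Fs have a: "((F + ln 2) / F) powr (- \<alpha>) > \<theta>0" and F: "F > 0" by auto
    have "(F + ln 2) powr (- \<alpha>) = ((F + ln 2) / F) powr (- \<alpha>) * F powr (- \<alpha>)"
      using F by (simp add: powr_divide)
    also have "\<dots> \<ge> \<theta>0 * F powr (- \<alpha>)" using a by (intro mult_right_mono) auto
    finally show "(F + ln 2) powr (- \<alpha>) \<ge> \<theta>0 * F powr (- \<alpha>)" .
  qed
qed

lemma pos_lower:
  fixes u0 :: "real \<Rightarrow> real"
  assumes cont: "continuous_on UNIV u0" and pos: "\<forall>x. u0 x > 0"
    and lb: "\<exists>c>0. \<forall>\<^sub>F x in at_bot. u0 x \<ge> c"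
  shows "\<exists>m>0. \<forall>y\<le>X. u0 y \<ge> m"
proof -
  obtain c where c: "c > 0" "\<forall>\<^sub>F x in at_bot. u0 x \<ge> c" using lb by auto
  then obtain b where b: "\<And>y. y \<le> b \<Longrightarrow> u0 y \<ge> c" by (auto simp: eventually_at_bot_linorder)
  show ?thesis
  proof (cases "b \<le> X")
    case True
    obtain z where z: "z \<in> {b..X}" "\<And>y. y \<in> {b..X} \<Longrightarrow> u0 z \<le> u0 y"
      using continuous_attains_inf[of "{b..X}" u0] True continuous_on_subset[OF cont] by auto
    show ?thesis
    proof (intro exI[of _ "min c (u0 z)"] conjI allI impI)
      show "0 < min c (u0 z)" using c pos by auto
      fix y assume "y \<le> X"
      show "min c (u0 z) \<le> u0 y"
      proof (cases "y \<le> b")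
        case True then show ?thesis using b[OF True] by simp
      next
        case False then have "y \<in> {b..X}" using \<open>y \<le> X\<close> by auto
        then show ?thesis using z(2) by force
      qed
    qed
  next
    case False
    then show ?thesis using b c by (intro exI[of _ c]) auto
  qed
qed


theorem lemma3p4:
  fixes f f' :: "real \<Rightarrow> real" and u0 u1 u2 :: "real \<Rightarrow> real"
    and s0 K \<alpha> r \<xi>0 \<epsilon> \<rho> :: real
  assumes f_deriv: "\<forall>s\<in>{0..1}. (f has_real_derivative f' s) (at s within {0..1})"
    and f'_cont: "continuous_on {0..1} f'"
    and f0: "f 0 = 0" and f1: "f 1 = 0"
    and fpos: "\<forall>s\<in>{0<..<1}. f s > 0"
    and f'1: "f' 1 < 0"
    and s0: "0 < s0" "s0 < 1" and K: "K \<ge> 0" and \<alpha>: "\<alpha> > 0" and r: "r > 0"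
    and f_upper: "\<forall>s\<in>{0<..<1}. f s \<le> r * s / (1 + \<bar>ln s\<bar>) powr \<alpha>"
    and f_lower: "\<forall>s\<in>{0<..s0}. f s \<ge> r * s / (1 + \<bar>ln s\<bar>) powr \<alpha> * (1 - K * s)"
    and u0_range: "\<forall>x. 0 \<le> u0 x \<and> u0 x \<le> 1"
    and u0_uc: "uniformly_continuous_on UNIV u0"
    and u0_pos: "\<forall>x. u0 x > 0"
    and u0_liminf: "\<exists>c>0. \<forall>\<^sub>F x in at_bot. u0 x \<ge> c"
    and u0_lim: "(u0 \<longlongrightarrow> 0) at_top"
    and \<xi>0: "\<xi>0 > 0"
    and u0_d1: "\<forall>x\<in>{\<xi>0..}. (u0 has_real_derivative u1 x) (at x within {\<xi>0..})"
    and u0_d2: "\<forall>x\<in>{\<xi>0..}. (u1 has_real_derivative u2 x) (at x within {\<xi>0..})"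
    and u0_C2: "continuous_on {\<xi>0..} u2"
    and u0_noninc: "\<forall>x y. \<xi>0 \<le> x \<and> x \<le> y \<longrightarrow> u0 y \<le> u0 x"
    and phi1: "(\<lambda>x. deriv (phi0 u0) x) \<in> o[at_top](\<lambda>x. phi0 u0 x powr (- \<alpha>))"
    and phi2: "(\<lambda>x. deriv (deriv (phi0 u0)) x) \<in> o[at_top](\<lambda>x. deriv (phi0 u0) x)"
    and \<epsilon>: "\<epsilon> > 0"
    and \<rho>: "max (r - \<epsilon> / 2) (3 / 4 * r) < \<rho>" "\<rho> < r"
  shows "\<exists>M. M \<ge> max (1 / (2 * Inf (u0 ` {..< max \<xi>0 (x0fun u0 \<alpha> \<rho> 0)}))) (1 / (4 * s0))
           \<and> (\<forall>t>0. \<forall>x. x \<le> xMfun u0 \<alpha> \<rho> M t \<longrightarrow> subsol_at f (\<lambda>_ _. 1 / (4 * M)) t x)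
           \<and> (\<forall>t>0. \<forall>x. x > xMfun u0 \<alpha> \<rho> M t \<longrightarrow>
                  subsol_at f (\<lambda>s y. gfun M (wfun u0 \<alpha> \<rho> s y)) t x)"
  proof -
  let ?P = "phi0 u0"
  have contu: "continuous_on UNIV u0" using uniformly_continuous_imp_continuous[OF u0_uc] .
  have isc: "\<And>z. isCont u0 z" using contu continuous_on_eq_continuous_at open_UNIV by blast
  have \<rho>pos: "\<rho> > 0" using \<rho> r by auto
  define c where "c = (r - \<rho>) / 2"
  have c: "c > 0" using \<rho> by (simp add: c_def)
  define \<delta> where "\<delta> = min 1 (c / (2 + 2 * \<alpha>))"
  have \<delta>0: "\<delta> > 0" using c \<alpha> by (simp add: \<delta>_def)
  have \<delta>c: "\<delta>\<^sup>2 * (2 + 2 * \<alpha>) \<le> (r - \<rho>) / 2"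
  proof -
    have d1: "\<delta> \<le> 1" by (simp add: \<delta>_def)
    have "\<delta>\<^sup>2 \<le> \<delta>" using mult_right_mono[OF d1, of \<delta>] \<delta>0 by (simp add: power2_eq_square)
    moreover have "\<delta> * (2 + 2 * \<alpha>) \<le> c"
    proof -
      have d2: "\<delta> \<le> c / (2 + 2 * \<alpha>)" by (simp add: \<delta>_def)
      then have "\<delta> * (2 + 2 * \<alpha>) \<le> c / (2 + 2 * \<alpha>) * (2 + 2 * \<alpha>)" using \<alpha> by (intro mult_right_mono) auto
      then show ?thesis using \<alpha> by simp
    qed
    ultimately have "\<delta>\<^sup>2 * (2 + 2 * \<alpha>) \<le> c" using \<alpha>
      by (meson dual_order.trans less_eq_real_def mult_right_mono add_nonneg_nonneg zero_le_numeral
            mult_nonneg_nonneg)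
    then show ?thesis by (simp add: c_def)
  qed
  define \<delta>' where "\<delta>' = \<delta> / 2 powr \<alpha>"
  have \<delta>'0: "\<delta>' > 0" using \<delta>0 by (simp add: \<delta>'_def)
  have ev1: "\<forall>\<^sub>F x in at_top. norm (deriv ?P x) \<le> \<delta>' * norm (?P x powr (- \<alpha>))"
    using landau_o.smallD[OF phi1 \<delta>'0] .
  have ev2: "\<forall>\<^sub>F x in at_top. norm (deriv (deriv ?P) x) \<le> \<delta> * norm (deriv ?P x)"
    using landau_o.smallD[OF phi2 \<delta>0] .
  have ev3: "\<forall>\<^sub>F x in at_top. u0 x < exp (-1)"
    using order_tendstoD(2)[OF u0_lim] by simp
  obtain X0 where X0: "\<And>x. x \<ge> X0 \<Longrightarrow> norm (deriv ?P x) \<le> \<delta>' * norm (?P x powr (- \<alpha>))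
      \<and> norm (deriv (deriv ?P) x) \<le> \<delta> * norm (deriv ?P x) \<and> u0 x < exp (-1)"
    using eventually_conj[OF ev1 eventually_conj[OF ev2 ev3]] by (auto simp: eventually_at_top_linorder)
  define X where "X = max X0 (\<xi>0 + 1)"
  have hX: "x > \<xi>0 \<and> 1 < ?P x \<and> \<bar>deriv ?P x\<bar> * (1 + ?P x) powr \<alpha> \<le> \<delta>
      \<and> \<bar>deriv (deriv ?P) x\<bar> \<le> \<delta> * \<bar>deriv ?P x\<bar>" if x: "x \<ge> X" for x
  proof -
    have h: "\<bar>deriv ?P x\<bar> \<le> \<delta>' * \<bar>?P x powr (- \<alpha>)\<bar>" "\<bar>deriv (deriv ?P) x\<bar> \<le> \<delta> * \<bar>deriv ?P x\<bar>"
       "u0 x < exp (-1)" using X0[of x] x by (auto simp: X_def)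
    have P1: "1 < ?P x"
    proof -
      have "ln (u0 x) < ln (exp (-1))" using h(3) u0_pos by (subst ln_less_cancel_iff) auto
      then show ?thesis by (simp add: phi0_def)
    qed
    have "\<bar>deriv ?P x\<bar> * (1 + ?P x) powr \<alpha> \<le> \<delta>' * ?P x powr (- \<alpha>) * (2 powr \<alpha> * ?P x powr \<alpha>)"
    proof (rule mult_mono)
      show "\<bar>deriv ?P x\<bar> \<le> \<delta>' * ?P x powr (- \<alpha>)" using h(1) P1 by simp
      have "(1 + ?P x) powr \<alpha> \<le> (2 * ?P x) powr \<alpha>" using P1 \<alpha> by (intro powr_mono2) auto
      then show "(1 + ?P x) powr \<alpha> \<le> 2 powr \<alpha> * ?P x powr \<alpha>" using P1 by (simp add: powr_mult)
    qed (use \<delta>'0 P1 in auto)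
    also have "\<dots> = \<delta>' * 2 powr \<alpha> * (?P x powr (- \<alpha>) * ?P x powr \<alpha>)" by (simp add: algebra_simps)
    also have "?P x powr (- \<alpha>) * ?P x powr \<alpha> = 1" using P1 by (simp add: powr_minus)
    also have "\<delta>' * 2 powr \<alpha> * 1 = \<delta>" by (simp add: \<delta>'_def)
    finally show ?thesis using h P1 x by (auto simp: X_def)
  qed
  obtain Fs where Fs: "\<And>F. F \<ge> Fs \<Longrightarrow> (F + ln 2) powr (- \<alpha>) \<ge> (\<rho> + r) / (2 * r) * F powr (- \<alpha>)"
    using theta_ev[OF \<alpha>, of "(\<rho> + r) / (2 * r)"] \<rho> r by (auto simp: field_simps)
  obtain m where m: "m > 0" "\<And>y. y \<le> X \<Longrightarrow> u0 y \<ge> m"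
    using pos_lower[OF contu u0_pos u0_liminf, of X] by auto
  define Mreq where "Mreq = max (1 / (2 * Inf (u0 ` {..< max \<xi>0 (x0fun u0 \<alpha> \<rho> 0)}))) (1 / (4 * s0))"
  define M where "M = max Mreq (max 1 (max (2 * K) (max (1 / (2 * s0)) (max (1 / m) (exp \<bar>Fs\<bar>)))))"
  have M1: "M \<ge> 1" and MK: "2 * K \<le> M" and Ms0: "1 / (2 * M) \<le> s0" and Mm: "1 / (2 * M) < m"
    and MFs: "ln (2 * M) \<ge> \<bar>Fs\<bar>" and MMreq: "M \<ge> Mreq"
  proof -
    show M1: "M \<ge> 1" "2 * K \<le> M" "M \<ge> Mreq" unfolding M_def by (simp_all add: le_max_iff_disj)
    have "1 / (2 * s0) \<le> M" by (simp add: M_def le_max_iff_disj)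
    then show "1 / (2 * M) \<le> s0" using s0 M1 by (simp add: field_simps)
    have "1 / m \<le> M" by (simp add: M_def le_max_iff_disj)
    then show "1 / (2 * M) < m" using m M1 by (simp add: field_simps)
    have "exp \<bar>Fs\<bar> \<le> M" unfolding M_def by (simp add: le_max_iff_disj)
    then have "exp \<bar>Fs\<bar> \<le> 2 * M" using M1 by simp
    then have "ln (exp \<bar>Fs\<bar>) \<le> ln (2 * M)" using M1 by (subst ln_le_cancel_iff) auto
    then show "ln (2 * M) \<ge> \<bar>Fs\<bar>" by simp
  qed
  have lnM: "ln (2 * M) > 0" using M1 by simp
  show ?thesis
  proof (intro exI[of _ M] conjI allI impI)
    show "max (1 / (2 * Inf (u0 ` {..< max \<xi>0 (x0fun u0 \<alpha> \<rho> 0)}))) (1 / (4 * s0)) \<le> M"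
      using MMreq by (simp add: Mreq_def)
  next
    fix t x assume "t > (0::real)" "x \<le> xMfun u0 \<alpha> \<rho> M t"
    have "f (1 / (4 * M)) > 0" using fpos M1 by auto
    then show "subsol_at f (\<lambda>_ _. 1 / (4 * M)) t x" unfolding subsol_at_def
      by (intro exI[of _ 0] exI[of _ "\<lambda>_. 0"] conjI) (auto intro: DERIV_const)
  next
    fix t x assume t: "t > (0::real)" and x: "x > xMfun u0 \<alpha> \<rho> M t"
    define A where "A = (1 + ln (2 * M)) powr (\<alpha> + 1)"
    define B where "B = (A + \<rho> * (\<alpha> + 1) * t) powr (1 / (\<alpha> + 1))"
    define L where "L = exp (1 - B)"
    define SS where "SS = {x. u0 x = L}"
    have xM: "xMfun u0 \<alpha> \<rho> M t = Sup SS" by (simp add: xMfun_def SS_def L_def A_def B_def)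
    have A1: "A \<ge> 1" unfolding A_def using lnM \<alpha> by (simp add: ge_one_powr_ge_zero)
    have Aroot: "A powr (1 / (\<alpha> + 1)) = 1 + ln (2 * M)"
      using lnM \<alpha> by (simp add: A_def powr_powr)
    have BA: "B > 1 + ln (2 * M)"
      unfolding B_def Aroot[symmetric] using A1 \<rho>pos t \<alpha> by (intro powr_less_mono2) auto
    have Bpow: "B powr (\<alpha> + 1) = A + \<rho> * (\<alpha> + 1) * t"
      unfolding B_def using A1 \<rho>pos t \<alpha> by (simp add: powr_powr)
    have L0: "L > 0" by (simp add: L_def)
    have LM: "L < 1 / (2 * M)"
    proof -
      have "L < exp (- ln (2 * M))" unfolding L_def using BA by simp
      also have "\<dots> = 1 / (2 * M)" using M1 by (simp add: exp_minus inverse_eq_divide)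
      finally show ?thesis .
    qed
    obtain N where N: "\<And>y. y \<ge> N \<Longrightarrow> u0 y < L"
      using order_tendstoD(2)[OF u0_lim L0] by (auto simp: eventually_at_top_linorder)
    define Z where "Z = max N X"
    have uZ: "u0 Z < L" using N by (simp add: Z_def)
    have uX: "L < u0 X" using m(2)[of X] Mm LM by simp
    have XZ: "\<xi>0 < X" "X \<le> Z" by (auto simp: X_def Z_def)
    obtain y0 where y0: "X \<le> y0" "y0 \<le> Z" "u0 y0 = L"
      using IVT2[of u0 Z L X, OF less_imp_le[OF uZ] less_imp_le[OF uX] XZ(2)] isc by blast
    have bdd: "bdd_above SS"
    proof (rule bdd_aboveI[of _ Z])
      fix y assume "y \<in> SS"
      then have "u0 y = L" by (simp add: SS_def)
      show "y \<le> Z"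
      proof (rule ccontr)
        assume "\<not> y \<le> Z"
        then have "u0 y \<le> u0 Z" using u0_noninc XZ by auto
        then show False using uZ \<open>u0 y = L\<close> by simp
      qed
    qed
    have y0S: "y0 \<le> Sup SS" using y0 bdd by (intro cSup_upper) (auto simp: SS_def)
    have key: "y > X \<and> u0 y < L" if y: "y > Sup SS" for y
    proof -
      have "y > y0" using y y0S by simp
      then have "u0 y \<le> u0 y0" using u0_noninc XZ y0 by auto
      moreover have "u0 y \<noteq> L"
      proof
        assume "u0 y = L"
        then have "y \<le> Sup SS" using bdd by (intro cSup_upper) (auto simp: SS_def)
        then show False using y by simp
      qed
      ultimately show ?thesis using y0 \<open>y > y0\<close> by auto
    qed
    have keyF: "y > X \<and> 1 + ?P y > 0 \<and> (1 + ?P y) powr (\<alpha> + 1) - \<rho> * (\<alpha> + 1) * t > 0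
        \<and> ((1 + ?P y) powr (\<alpha> + 1) - \<rho> * (\<alpha> + 1) * t) powr (1 / (\<alpha> + 1)) > 1 + ln (2 * M)"
      if y: "y > Sup SS" for y
    proof -
      have k: "y > X" "u0 y < L" using key[OF y] by auto
      have "ln (u0 y) < ln L" using k u0_pos L0 by (subst ln_less_cancel_iff) auto
      then have PB: "1 + ?P y > B" by (simp add: phi0_def L_def)
      have B0: "B \<ge> 0" by (simp add: B_def)
      have "B powr (\<alpha> + 1) < (1 + ?P y) powr (\<alpha> + 1)" using PB B0 \<alpha> by (intro powr_less_mono2) auto
      then have psiA: "(1 + ?P y) powr (\<alpha> + 1) - \<rho> * (\<alpha> + 1) * t > A" using Bpow by simp
      have "A powr (1 / (\<alpha> + 1)) < ((1 + ?P y) powr (\<alpha> + 1) - \<rho> * (\<alpha> + 1) * t) powr (1 / (\<alpha> + 1))"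
        using psiA A1 \<alpha> by (intro powr_less_mono2) auto
      then show ?thesis using k PB B0 psiA A1 Aroot by auto
    qed
    define SO where "SO = {Sup SS<..}"
    have SO: "open SO" "x \<in> SO" using x xM by (auto simp: SO_def)
    have SOX: "y > \<xi>0" if "y \<in> SO" for y using that keyF[of y] XZ(1) by (auto simp: SO_def)
    have dP: "(?P has_real_derivative deriv ?P y) (at y)" if "y \<in> SO" for y
      using phi_derivs(1)[OF u0_d1 u0_d2 u0_pos SOX[OF that]] .
    have dp1: "(deriv ?P has_real_derivative deriv (deriv ?P) x) (at x)"
      using phi_derivs(2)[OF u0_d1 u0_d2 u0_pos SOX[OF SO(2)]] .
    have psiS: "0 < (1 + ?P y) powr (\<alpha> + 1) - \<rho> * (\<alpha> + 1) * t" if "y \<in> SO" for y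
      using keyF[of y] that by (simp add: SO_def)
    have ES: "0 < 1 + ?P y" if "y \<in> SO" for y
      using keyF[of y] that by (simp add: SO_def)
    note sd' = space_derivs[OF dP dp1 SO psiS ES \<alpha>]
    show "subsol_at f (\<lambda>s y. gfun M (wfun u0 \<alpha> \<rho> s y)) t x"
    proof -
      define F where "F = (\<lambda>y. ((1 + ?P y) powr (\<alpha> + 1) - \<rho> * (\<alpha> + 1) * t) powr (1 / (\<alpha> + 1)))"
      define F1 where "F1 = (\<lambda>y. F y powr (- \<alpha>) * (1 + ?P y) powr \<alpha> * deriv ?P y)"
      define F2 where "F2 = (- \<alpha> * F x powr (- \<alpha> - 1) * F1 x) * (1 + ?P x) powr \<alpha> * deriv ?P x
        + F x powr (- \<alpha>) * (\<alpha> * (1 + ?P x) powr (\<alpha> - 1) * deriv ?P x) * deriv ?P x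
        + F x powr (- \<alpha>) * (1 + ?P x) powr \<alpha> * deriv (deriv ?P) x"
      have dF: "\<And>y. y \<in> SO \<Longrightarrow> (F has_real_derivative F1 y) (at y)"
        using sd'(1) unfolding F_def F1_def by simp
      have dF1: "(F1 has_real_derivative F2) (at x)"
        using sd'(2) unfolding F_def F1_def F2_def by simp
      note vs = V_space_derivs[OF dF dF1 SO(2), where M=M]
      define C where "C = (1 + ?P x) powr (\<alpha> + 1)"
      have psi: "C - \<rho> * (\<alpha> + 1) * t > 0" using keyF[of x] SO by (simp add: SO_def C_def)
      note vt = V_time_deriv[OF psi \<alpha>, where M=M]
      have wF: "\<And>s y. wfun u0 \<alpha> \<rho> s y = exp (1 - ((1 + ?P y) powr (\<alpha> + 1) - \<rho> * (\<alpha> + 1) * s) powr (1 / (\<alpha> + 1)))"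
        by (simp add: wfun_def)
      have Vt_eq: "(\<lambda>s. gfun M (wfun u0 \<alpha> \<rho> s x)) = (\<lambda>s. gfun M (exp (1 - (C - \<rho> * (\<alpha> + 1) * s) powr (1 / (\<alpha> + 1)))))"
        by (simp add: wF C_def)
      have Vx_eq: "(\<lambda>y. gfun M (wfun u0 \<alpha> \<rho> t y)) = (\<lambda>y. gfun M (exp (1 - F y)))"
        by (simp add: wF F_def)
      have FxC: "F x = (C - \<rho> * (\<alpha> + 1) * t) powr (1 / (\<alpha> + 1))" by (simp add: F_def C_def)
      have Fx: "F x > 1 + ln (2 * M)" using keyF[of x] SO by (simp add: F_def SO_def)
      have xX: "x \<ge> X" using keyF[of x] SO by (simp add: SO_def)
      define w where "w = exp (1 - F x)"
      have w2M: "w < 1 / (2 * M)"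
      proof -
        have "w < exp (- ln (2 * M))" unfolding w_def using Fx by simp
        also have "\<dots> = 1 / (2 * M)" using M1 by (simp add: exp_minus inverse_eq_divide)
        finally show ?thesis .
      qed
      have w0: "w > 0" by (simp add: w_def)
      have Mw: "M * w \<le> 1 / 2" using w2M M1 by (simp add: field_simps)
      have gs0: "w * (1 - M * w) \<le> s0"
      proof -
        have "w * (1 - M * w) \<le> w" using w0 M1 by (simp add: mult_le_cancel_left1)
        then show ?thesis using w2M Ms0 by linarith
      qed
      have F1x: "F x \<ge> 1" using Fx lnM by linarith
      have thx: "(F x + ln 2) powr (- \<alpha>) \<ge> (\<rho> + r) / (2 * r) * F x powr (- \<alpha>)"
        using Fs[of "F x"] Fx MFs lnM by linarith
      have r34: "3 / 4 * r < \<rho>" using \<rho>(1) by simp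
      have hx: "1 < ?P x" "\<bar>deriv ?P x\<bar> * (1 + ?P x) powr \<alpha> \<le> \<delta>"
        "\<bar>deriv (deriv ?P) x\<bar> \<le> \<delta> * \<bar>deriv ?P x\<bar>" using hX[OF xX] by auto
      have ineq: "(1 - 2 * M * w) * w * \<rho> * F x powr (- \<alpha>)
          - ((1 - 4 * M * w) * w * (F1 x)\<^sup>2 - (1 - 2 * M * w) * w * F2) - f (gfun M w) \<le> 0"
      proof -
        have e1: "F1 x = F x powr (- \<alpha>) * (1 + ?P x) powr \<alpha> * deriv ?P x" by (simp add: F1_def)
        have e2: "1 \<le> 1 + ?P x" using hx(1) by simp
        have M0: "M > 0" using M1 by simp
        show ?thesis
          by (rule core_ineq[OF \<alpha> r r34 \<rho>(2) K MK M0 w_def F1x Mw gs0 f_lower e2 hx(2) hx(3)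
               less_imp_le[OF \<delta>0] \<delta>c thx e1 F2_def])
      qed
      have G: "((\<lambda>s. gfun M (wfun u0 \<alpha> \<rho> s x)) has_real_derivative (1 - 2 * M * w) * w * \<rho> * F x powr (- \<alpha>)) (at t)"
          unfolding Vt_eq w_def FxC by (rule vt)
        have G2: "\<forall>\<^sub>F y in nhds x. ((\<lambda>y. gfun M (wfun u0 \<alpha> \<rho> t y)) has_real_derivative
             (1 - 2 * M * exp (1 - F y)) * (- exp (1 - F y) * F1 y)) (at y)"
          unfolding Vx_eq using eventually_nhds_in_open[OF SO] by (rule eventually_mono) (rule vs(1))
        have G3: "((\<lambda>y. (1 - 2 * M * exp (1 - F y)) * (- exp (1 - F y) * F1 y)) has_real_derivative
             (1 - 4 * M * w) * w * (F1 x)\<^sup>2 - (1 - 2 * M * w) * w * F2) (at x)"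
          unfolding w_def by (rule vs(2))
        have G4: "(1 - 2 * M * w) * w * \<rho> * F x powr (- \<alpha>) - ((1 - 4 * M * w) * w * (F1 x)\<^sup>2 - (1 - 2 * M * w) * w * F2)
            - f (gfun M (wfun u0 \<alpha> \<rho> t x)) \<le> 0"
          using ineq by (simp add: wF F_def w_def)
        show ?thesis unfolding subsol_at_def
          apply (rule exI[of _ "(1 - 2 * M * w) * w * \<rho> * F x powr (- \<alpha>)"])
          apply (rule exI[of _ "\<lambda>y. (1 - 2 * M * exp (1 - F y)) * (- exp (1 - F y) * F1 y)"])
          apply (rule exI[of _ "(1 - 4 * M * w) * w * (F1 x)\<^sup>2 - (1 - 2 * M * w) * w * F2"])
          apply (intro conjI)
             apply (fact G)
            apply (fact G2)
           apply (fact G3)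
          apply (fact G4)
          done
    qed
  qed
qed

end
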